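(* Let $M$ be a structure in a relational language with finitely many constant symbols, and $n\in\omega$. Suppose $\mathrm{Age}(M)$ is $(n+1)$-wqo. If $M^*$ is an expansion of $M$ by finitely many constants, then $\mathrm{Age}(M^* )$ is $n$-wqo.
   Context: $\mathrm{Age}(M)$ is the class of isomorphism types of finite substructures of $M$, quasi-ordered by embeddability; it is wqo if it contains no infinite antichain. $\mathrm{Age}(M)$ is $n$-wqo if $\mathrm{Age}(M')$ is wqo for every expansion $M'$ of $M$ by $n$ unary predicates partitioning the universe. *)

theory Defs
  imports Main
begin

record ('a, 'r, 'c) struc =
  univ :: "'a set"
  ar   :: "'r \<Rightarrow> nat"
  rel  :: "'r \<Rightarrow> 'a list \<Rightarrow> bool"
  cst  :: "'c \<Rightarrow> 'a"

definition struc_wf :: "('a, 'r, 'c) struc \<Rightarrow> bool" where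
  "struc_wf M \<longleftrightarrow> univ M \<noteq> {} \<and> (\<forall>c. cst M c \<in> univ M) \<and>
     (\<forall>r xs. rel M r xs \<longrightarrow> length xs = ar M r \<and> set xs \<subseteq> univ M)"

text \<open>Finite substructures: finite subsets of the universe closed under the constants
  (the language is relational, so these are exactly the substructures).\<close>

definition fin_sub :: "('a, 'r, 'c) struc \<Rightarrow> 'a set \<Rightarrow> bool" where
  "fin_sub M A \<longleftrightarrow> finite A \<and> A \<subseteq> univ M \<and> range (cst M) \<subseteq> A"

definition embeds :: "('a, 'r, 'c) struc \<Rightarrow> 'a set \<Rightarrow> ('b, 'r, 'c) struc \<Rightarrow> 'b set \<Rightarrow> bool" where
  "embeds M A N B \<longleftrightarrow> (\<exists>f. inj_on f A \<and> f ` A \<subseteq> B \<and> (\<forall>c. f (cst M c) = cst N c) \<and>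
     (\<forall>r xs. set xs \<subseteq> A \<longrightarrow> length xs = ar M r \<longrightarrow> (rel M r xs \<longleftrightarrow> rel N r (map f xs))))"

definition age_wqo :: "('a, 'r, 'c) struc \<Rightarrow> bool" where
  "age_wqo M \<longleftrightarrow> \<not> (\<exists>A :: nat \<Rightarrow> 'a set. (\<forall>i. fin_sub M (A i)) \<and>
      (\<forall>i j. i \<noteq> j \<longrightarrow> \<not> embeds M (A i) M (A j)))"

text \<open>Expansion of M by n unary predicates P_0,...,P_(n-1) given by a colouring col:
  P_i = {x in the universe. col x = i}.\<close>

definition colour_exp :: "('a, 'r, 'c) struc \<Rightarrow> nat \<Rightarrow> ('a \<Rightarrow> nat) \<Rightarrow> ('a, 'r + nat, 'c) struc" where
  "colour_exp M n col = \<lparr> univ = univ M,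
     ar = (\<lambda>s. case s of Inl r \<Rightarrow> ar M r | Inr i \<Rightarrow> 1),
     rel = (\<lambda>s xs. case s of Inl r \<Rightarrow> rel M r xs
                 | Inr i \<Rightarrow> i < n \<and> (\<exists>x. xs = [x] \<and> x \<in> univ M \<and> col x = i)),
     cst = cst M \<rparr>"

definition n_wqo :: "('a, 'r, 'c) struc \<Rightarrow> nat \<Rightarrow> bool" where
  "n_wqo M n \<longleftrightarrow> (\<forall>col. (\<forall>x \<in> univ M. col x < n) \<longrightarrow> age_wqo (colour_exp M n col))"

definition const_exp :: "('a, 'r, 'c) struc \<Rightarrow> ('d \<Rightarrow> 'a) \<Rightarrow> ('a, 'r, 'c + 'd) struc" where
  "const_exp M d = \<lparr> univ = univ M, ar = ar M, rel = rel M,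
     cst = (\<lambda>s. case s of Inl c \<Rightarrow> cst M c | Inr e \<Rightarrow> d e) \<rparr>"

end

theory Submission imports Defs "HOL-Library.FuncSet" "HOL-Library.Ramsey" begin

lemma nat_fin_range_rep:
  fixes g :: "nat \<Rightarrow> 'b"
  assumes "finite S" "\<forall>k. g k \<in> S"
  shows "\<exists>k l. k < l \<and> g k = g l"
proof -
  have "\<not> inj g"
  proof
    assume "inj g"
    then have "infinite (range g)" using finite_imageD by blast
    moreover have "range g \<subseteq> S" using assms by auto
    ultimately show False using assms(1) finite_subset by blast
  qed
  then obtain k l where "k \<noteq> l" "g k = g l" unfolding inj_def by blast
  then show ?thesis by (metis linorder_neqE_nat)
qed

lemma chain_fwd:
  fixes P :: "'a set \<Rightarrow> 'a set \<Rightarrow> ('a \<Rightarrow> 'a) \<Rightarrow> bool" and B :: "nat \<Rightarrow> 'a set"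
  assumes finD: "finite D"
    and comp: "\<And>X Y Z f g. P X Y f \<Longrightarrow> P Y Z g \<Longrightarrow> P X Z (g \<circ> f)"
    and PD: "\<And>X Y f. P X Y f \<Longrightarrow> f ` D \<subseteq> D \<and> inj_on f D"
    and step: "\<forall>k. \<exists>f. P (B k) (B (Suc k)) f"
  shows "\<exists>k l f. k < l \<and> P (B k) (B l) f \<and> (\<forall>x\<in>D. f x = x)"
proof -
  obtain F where F: "\<And>k. P (B k) (B (Suc k)) (F k)" using step by metis
  define g where "g = rec_nat (F 0) (\<lambda>k gk. F (Suc k) \<circ> gk)"
  have g0: "g 0 = F 0" and gS: "\<And>k. g (Suc k) = F (Suc k) \<circ> g k" by (simp_all add: g_def)
  have Pg: "P (B 0) (B (Suc k)) (g k)" for k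
  proof (induction k)
    case 0 show ?case using F[of 0] by (simp only: g0)
  next
    case (Suc k) show ?case unfolding gS by (rule comp[OF Suc.IH F])
  qed
  define h where "h k = rec_nat (F (Suc k)) (\<lambda>m hm. F (Suc k + Suc m) \<circ> hm)" for k
  have h0: "h k 0 = F (Suc k)" and hS: "\<And>m. h k (Suc m) = F (Suc k + Suc m) \<circ> h k m" for k
    by (simp_all add: h_def)
  have Ph: "P (B (Suc k)) (B (Suc k + Suc m)) (h k m)" for k m
  proof (induction m)
    case 0 show ?case using F[of "Suc k"] by (simp only: h0 add_Suc_right add_0_right)
  next
    case (Suc m)
    have e: "Suc k + Suc (Suc m) = Suc (Suc k + Suc m)" by simp
    show ?case unfolding hS e by (rule comp[OF Suc.IH F])
  qed
  have gh: "g (k + Suc m) x = h k m (g k x)" for k m x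
  proof (induction m arbitrary: x)
    case 0 show ?case by (simp only: h0 gS add_Suc_right add_0_right comp_apply)
  next
    case (Suc m)
    have "g (k + Suc (Suc m)) x = F (Suc (k + Suc m)) (g (k + Suc m) x)"
      by (simp only: add_Suc_right[of k "Suc m"] gS comp_apply)
    also have "\<dots> = F (Suc (k + Suc m)) (h k m (g k x))" by (simp only: Suc.IH)
    also have "\<dots> = h k (Suc m) (g k x)" by (simp only: hS comp_apply add_Suc)
    finally show ?case .
  qed
  have r: "restrict (g k) D \<in> D \<rightarrow>\<^sub>E D" for k using PD[OF Pg[of k]] by (simp add: image_subset_iff)
  have fin: "finite (D \<rightarrow>\<^sub>E D)" using finD by (simp add: finite_PiE)
  have r': "\<forall>k. restrict (g k) D \<in> D \<rightarrow>\<^sub>E D" using r by blast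
  obtain k l where kl: "k < l" "restrict (g k) D = restrict (g l) D"
    using nat_fin_range_rep[OF fin r'] by blast
  define m where "m = l - k - 1"
  have l: "l = k + Suc m" using kl(1) unfolding m_def by arith
  have surj: "g k ` D = D" using PD[OF Pg[of k]] finD by (simp add: endo_inj_surj)
  have "\<forall>x\<in>D. h k m x = x"
  proof
    fix x assume "x \<in> D"
    then obtain y where y: "y \<in> D" "x = g k y" using surj by auto
    have "h k m x = g l y" by (simp only: l y(2) gh)
    also have "\<dots> = g k y" using arg_cong[OF kl(2), of "\<lambda>f. f y"] y(1) by simp
    finally show "h k m x = x" using y by simp
  qed
  then show ?thesis using Ph[of k m] kl(1) unfolding l by (intro exI[of _ "Suc k"] exI[of _ "Suc (k + Suc m)"] exI[of _ "h k m"]) simp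
qed

lemma chain_bwd:
  fixes P :: "'a set \<Rightarrow> 'a set \<Rightarrow> ('a \<Rightarrow> 'a) \<Rightarrow> bool" and B :: "nat \<Rightarrow> 'a set"
  assumes finD: "finite D"
    and comp: "\<And>X Y Z f g. P X Y f \<Longrightarrow> P Y Z g \<Longrightarrow> P X Z (g \<circ> f)"
    and PD: "\<And>X Y f. P X Y f \<Longrightarrow> f ` D \<subseteq> D \<and> inj_on f D"
    and step: "\<forall>k. \<exists>f. P (B (Suc k)) (B k) f"
  shows "\<exists>k l f. k < l \<and> P (B l) (B k) f \<and> (\<forall>x\<in>D. f x = x)"
proof -
  obtain F where F: "\<And>k. P (B (Suc k)) (B k) (F k)" using step by metis
  define g where "g = rec_nat (F 0) (\<lambda>k gk. gk \<circ> F (Suc k))"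
  have g0: "g 0 = F 0" and gS: "\<And>k. g (Suc k) = g k \<circ> F (Suc k)" by (simp_all add: g_def)
  have Pg: "P (B (Suc k)) (B 0) (g k)" for k
  proof (induction k)
    case 0 show ?case using F[of 0] by (simp only: g0)
  next
    case (Suc k) show ?case unfolding gS by (rule comp[OF F Suc.IH])
  qed
  define h where "h k = rec_nat (F (Suc k)) (\<lambda>m hm. hm \<circ> F (Suc k + Suc m))" for k
  have h0: "h k 0 = F (Suc k)" and hS: "\<And>m. h k (Suc m) = h k m \<circ> F (Suc k + Suc m)" for k
    by (simp_all add: h_def)
  have Ph: "P (B (Suc k + Suc m)) (B (Suc k)) (h k m)" for k m
  proof (induction m)
    case 0 show ?case using F[of "Suc k"] by (simp only: h0 add_Suc_right add_0_right)
  next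
    case (Suc m)
    have e: "Suc k + Suc (Suc m) = Suc (Suc k + Suc m)" by simp
    show ?case unfolding hS e by (rule comp[OF F Suc.IH])
  qed
  have gh: "g (k + Suc m) x = g k (h k m x)" for k m x
  proof (induction m arbitrary: x)
    case 0 show ?case by (simp only: h0 gS add_Suc_right add_0_right comp_apply)
  next
    case (Suc m)
    have "g (k + Suc (Suc m)) x = g (k + Suc m) (F (Suc (k + Suc m)) x)"
      by (simp only: add_Suc_right[of k "Suc m"] gS comp_apply)
    also have "\<dots> = g k (h k m (F (Suc (k + Suc m)) x))" by (simp only: Suc.IH)
    also have "\<dots> = g k (h k (Suc m) x)" by (simp only: hS comp_apply add_Suc)
    finally show ?case .
  qed
  have r: "restrict (g k) D \<in> D \<rightarrow>\<^sub>E D" for k using PD[OF Pg[of k]] by (simp add: image_subset_iff)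
  have fin: "finite (D \<rightarrow>\<^sub>E D)" using finD by (simp add: finite_PiE)
  have r': "\<forall>k. restrict (g k) D \<in> D \<rightarrow>\<^sub>E D" using r by blast
  obtain k l where kl: "k < l" "restrict (g k) D = restrict (g l) D"
    using nat_fin_range_rep[OF fin r'] by blast
  define m where "m = l - k - 1"
  have l: "l = k + Suc m" using kl(1) unfolding m_def by arith
  have "\<forall>x\<in>D. h k m x = x"
  proof
    fix x assume x: "x \<in> D"
    have hx: "h k m x \<in> D" using PD[OF Ph[of k m]] x by auto
    have "g k (h k m x) = g l x" by (simp only: l gh)
    also have "\<dots> = g k x" using arg_cong[OF kl(2), of "\<lambda>f. f x"] x by simp
    finally have e: "g k (h k m x) = g k x" .
    have "inj_on (g k) D" using PD[OF Pg[of k]] by blast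
    then show "h k m x = x" using e hx x by (rule inj_onD)
  qed
  then show ?thesis using Ph[of k m] kl(1) unfolding l by (intro exI[of _ "Suc k"] exI[of _ "Suc (k + Suc m)"] exI[of _ "h k m"]) simp
qed


lemma ce_sel: "univ (const_exp M d) = univ M" "ar (const_exp M d) = ar M" "rel (const_exp M d) = rel M"
  "cst (const_exp M d) = (\<lambda>s. case s of Inl c \<Rightarrow> cst M c | Inr e \<Rightarrow> d e)"
  by (simp_all add: const_exp_def)

lemma co_sel: "univ (colour_exp M n col) = univ M" "cst (colour_exp M n col) = cst M"
  "ar (colour_exp M n col) = (\<lambda>s. case s of Inl r \<Rightarrow> ar M r | Inr i \<Rightarrow> 1)"
  "rel (colour_exp M n col) = (\<lambda>s xs. case s of Inl r \<Rightarrow> rel M r xs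
                 | Inr i \<Rightarrow> i < n \<and> (\<exists>x. xs = [x] \<and> x \<in> univ M \<and> col x = i))"
  by (simp_all add: colour_exp_def)

theorem lemma5:
  fixes M :: "('a, 'r, 'c) struc" and d :: "'d::finite \<Rightarrow> 'a" and n :: nat
  assumes "finite (UNIV :: 'c set)"
    and "struc_wf M"
    and "n_wqo M (Suc n)"
    and "\<forall>e. d e \<in> univ M"
  shows "n_wqo (const_exp M d) n"
  unfolding n_wqo_def
proof (intro allI impI)
  fix col :: "'a \<Rightarrow> nat"
  assume colok0: "\<forall>x\<in>univ (const_exp M d). col x < n"
  have colok: "\<And>x. x \<in> univ M \<Longrightarrow> col x < n" using colok0 by (simp add: const_exp_def)
  define M' where "M' = colour_exp (const_exp M d) n col"
  define D where "D = range d"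
  define c' where "c' = (\<lambda>x. if x \<in> D then n else col x)"
  define N where "N = colour_exp M (Suc n) c'"
  have DU: "D \<subseteq> univ M" using assms(4) by (auto simp: D_def)
  have finD: "finite D" unfolding D_def by simp
  have wqoN: "age_wqo N"
  proof -
    have "\<forall>x\<in>univ M. c' x < Suc n" using colok by (auto simp: c'_def less_Suc_eq)
    then show ?thesis using assms(3) unfolding n_wqo_def N_def by blast
  qed
  have cstN: "cst N = cst M" and univN: "univ N = univ M" and arN: "ar N = (\<lambda>s. case s of Inl r \<Rightarrow> ar M r | Inr i \<Rightarrow> 1)"
    and relN: "rel N = (\<lambda>s xs. case s of Inl r \<Rightarrow> rel M r xs
                 | Inr i \<Rightarrow> i < Suc n \<and> (\<exists>x. xs = [x] \<and> x \<in> univ M \<and> c' x = i))"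
    unfolding N_def co_sel by (rule refl)+
  have cstM': "cst M' = (\<lambda>s. case s of Inl c \<Rightarrow> cst M c | Inr e \<Rightarrow> d e)" and univM': "univ M' = univ M"
    and arM': "ar M' = (\<lambda>s. case s of Inl r \<Rightarrow> ar M r | Inr i \<Rightarrow> 1)"
    and relM': "rel M' = (\<lambda>s xs. case s of Inl r \<Rightarrow> rel M r xs
                 | Inr i \<Rightarrow> i < n \<and> (\<exists>x. xs = [x] \<and> x \<in> univ M \<and> col x = i))"
    unfolding M'_def co_sel ce_sel by (rule refl)+
  define P where "P X Y f \<longleftrightarrow> D \<subseteq> X \<and> X \<subseteq> univ M \<and> inj_on f X \<and> f ` X \<subseteq> Y \<and>
      (\<forall>c. f (cst M c) = cst M c) \<and>
      (\<forall>r xs. set xs \<subseteq> X \<longrightarrow> length xs = ar N r \<longrightarrow> (rel N r xs \<longleftrightarrow> rel N r (map f xs)))"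
    for X Y :: "'a set" and f :: "'a \<Rightarrow> 'a"
  have embP: "\<exists>f. P X Y f" if "embeds N X N Y" "D \<subseteq> X" "X \<subseteq> univ M" for X Y
    using that unfolding embeds_def P_def cstN by blast
  have comp: "P X Z (g \<circ> f)" if "P X Y f" "P Y Z g" for X Y Z f g
  proof -
    have i: "inj_on f X" "f ` X \<subseteq> Y" "inj_on g Y" "g ` Y \<subseteq> Z"
      using that unfolding P_def by auto
    have "inj_on (g \<circ> f) X" using i by (meson comp_inj_on inj_on_subset)
    moreover have "(g \<circ> f) ` X \<subseteq> Z" using i by auto
    moreover have "rel N r xs \<longleftrightarrow> rel N r (map (g \<circ> f) xs)"
      if "set xs \<subseteq> X" "length xs = ar N r" for r xs
    proof -
      have pf: "\<And>r xs. set xs \<subseteq> X \<Longrightarrow> length xs = ar N r \<Longrightarrow> (rel N r xs \<longleftrightarrow> rel N r (map f xs))"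
        using \<open>P X Y f\<close> unfolding P_def by blast
      have pg: "\<And>r xs. set xs \<subseteq> Y \<Longrightarrow> length xs = ar N r \<Longrightarrow> (rel N r xs \<longleftrightarrow> rel N r (map g xs))"
        using \<open>P Y Z g\<close> unfolding P_def by blast
      have s1: "set (map f xs) \<subseteq> Y" using that(1) i(2) by auto
      have s2: "length (map f xs) = ar N r" using that(2) by simp
      have "rel N r xs \<longleftrightarrow> rel N r (map g (map f xs))" using pf[OF that] pg[OF s1 s2] by blast
      then show ?thesis by (simp only: map_map)
    qed
    ultimately show ?thesis using that unfolding P_def by auto
  qed
  have PD: "f ` D \<subseteq> D \<and> inj_on f D" if "P X Y f" for X Y f
  proof
    show "inj_on f D" using that unfolding P_def by (meson inj_on_subset)
    show "f ` D \<subseteq> D"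
    proof
      fix z assume "z \<in> f ` D"
      then obtain x where x: "x \<in> D" "z = f x" by blast
      have xX: "x \<in> X" "x \<in> univ M" using x(1) that unfolding P_def by auto
      have "rel N (Inr n) [x]" using xX x(1) by (simp add: relN c'_def)
      moreover have "set [x] \<subseteq> X" "length [x] = ar N (Inr n)" using xX by (auto simp: arN)
      ultimately have "rel N (Inr n) [f x]" using that unfolding P_def by auto
      then have "f x \<in> univ M" "c' (f x) = n" by (auto simp: relN)
      then show "z \<in> D" using colok x(2) by (auto simp: c'_def split: if_splits)
    qed
  qed
  have backE: "embeds M' X M' Y" if "P X Y f" "\<forall>x\<in>D. f x = x" "Y \<subseteq> univ M" for X Y f
    unfolding embeds_def
  proof (intro exI[of _ f] conjI allI impI)
    from that(1) have p: "D \<subseteq> X" "X \<subseteq> univ M" "inj_on f X" "f ` X \<subseteq> Y" "\<forall>c. f (cst M c) = cst M c"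
      "\<And>r xs. set xs \<subseteq> X \<Longrightarrow> length xs = ar N r \<Longrightarrow> (rel N r xs \<longleftrightarrow> rel N r (map f xs))"
      unfolding P_def by auto
    show "inj_on f X" "f ` X \<subseteq> Y" by (fact p(3), fact p(4))
    show "f (cst M' c) = cst M' c" for c
      using p(5) that(2) by (auto simp: cstM' D_def split: sum.splits)
    fix r xs assume xs: "set xs \<subseteq> X" "length xs = ar M' r"
    show "rel M' r xs = rel M' r (map f xs)"
    proof (cases r)
      case (Inl q)
      then show ?thesis using p(6)[of xs r] xs by (simp add: relN relM' arN arM')
    next
      case (Inr i)
      then obtain x where xx: "xs = [x]" using xs(2) by (auto simp: arM' length_Suc_conv)
      have xX: "x \<in> X" "x \<in> univ M" using xs(1) p(2) xx by auto
      have fxU: "f x \<in> univ M" using xX p(4) that(3) by auto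
      have "col x = i \<longleftrightarrow> col (f x) = i" if "i < n"
      proof (cases "x \<in> D")
        case True then show ?thesis using \<open>\<forall>x\<in>D. f x = x\<close> by simp
      next
        case False
        have fxD: "f x \<notin> D"
        proof
          assume "f x \<in> D"
          then have "f (f x) = f x" using \<open>\<forall>x\<in>D. f x = x\<close> by simp
          moreover have "f x \<in> X" using \<open>f x \<in> D\<close> p(1) by auto
          ultimately have "f x = x" using p(3) xX(1) by (meson inj_onD)
          then show False using False \<open>f x \<in> D\<close> by simp
        qed
        have "rel N (Inr i) [x] \<longleftrightarrow> rel N (Inr i) [f x]"
          using p(6)[of "[x]" "Inr i"] xX by (simp add: arN)
        then show ?thesis using False fxD xX fxU that by (simp add: relN c'_def)
      qed
      then show ?thesis using Inr xx xX fxU by (auto simp: relM')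
    qed
  qed
  show "age_wqo M'"
  proof (rule ccontr)
    assume "\<not> age_wqo M'"
    then have "\<exists>A :: nat \<Rightarrow> 'a set. (\<forall>i. fin_sub M' (A i)) \<and>
      (\<forall>i j. i \<noteq> j \<longrightarrow> \<not> embeds M' (A i) M' (A j))"
      unfolding age_wqo_def not_not .
    then obtain A :: "nat \<Rightarrow> 'a set" where finA: "\<forall>i. fin_sub M' (A i)"
      and anti: "\<forall>i j. i \<noteq> j \<longrightarrow> \<not> embeds M' (A i) M' (A j)"
      by blast
    have AU: "A i \<subseteq> univ M" for i using finA by (simp add: fin_sub_def univM')
    have DA: "D \<subseteq> A i" for i
    proof
      fix x assume "x \<in> D"
      then obtain e where "x = d e" by (auto simp: D_def)
      then have "x = cst M' (Inr e)" by (simp add: cstM')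
      then show "x \<in> A i" using finA unfolding fin_sub_def by blast
    qed
    have finN: "fin_sub N (A i)" for i
    proof -
      have "cst M c = cst M' (Inl c)" for c by (simp add: cstM')
      then have "range (cst M) \<subseteq> A i" using finA unfolding fin_sub_def by (metis (no_types, lifting) image_subset_iff rangeI subsetD)
      then show ?thesis using finA AU by (simp add: fin_sub_def cstN univN)
    qed
    define E where "E i j \<longleftrightarrow> embeds N (A i) N (A j)" for i j
    define cf where "cf X = (if E (Min X) (Max X) then 0 else if E (Max X) (Min X) then 1 else (2::nat))" for X
    obtain Y t where Y: "Y \<subseteq> (UNIV :: nat set)" "infinite Y" "t < 3"
      "\<forall>x\<in>Y. \<forall>y\<in>Y. x \<noteq> y \<longrightarrow> cf {x, y} = t"
    proof -
      have "\<forall>x\<in>(UNIV :: nat set). \<forall>y\<in>UNIV. x \<noteq> y \<longrightarrow> cf {x, y} < 3" by (simp add: cf_def)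
      from Ramsey2[OF infinite_UNIV_nat this] show ?thesis using that by blast
    qed
    define en where "en = enumerate Y"
    have enm: "k < l \<Longrightarrow> en k < en l" for k l using Y(2) by (simp add: en_def enumerate_mono)
    have enY: "en k \<in> Y" for k using Y(2) by (simp add: en_def enumerate_in_set)
    have cfkl: "cf {en k, en l} = t" if "k < l" for k l
      using Y(4) enY enm[OF that] by (metis less_irrefl)
    have cfE: "cf {en k, en l} = (if E (en k) (en l) then 0 else if E (en l) (en k) then 1 else 2)"
      if "k < l" for k l
    proof -
      have "Min {en k, en l} = en k" "Max {en k, en l} = en l" using enm[OF that] by auto
      then show ?thesis by (simp add: cf_def)
    qed
    define B where "B k = A (en k)" for k
    have t3: "t = 0 \<or> t = 1 \<or> t = 2" using Y(3) by auto
    have cfv: "(if E (en k) (en l) then 0 else if E (en l) (en k) then 1 else (2::nat)) = t" if "k < l" for k l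
      using cfkl[OF that] cfE[OF that] by simp
    show False
    proof (rule disjE[OF t3])
      assume t0: "t = 0"
      have stp: "\<forall>k. \<exists>f. P (B k) (B (Suc k)) f"
      proof
        fix k
        have c: "(if E (en k) (en (Suc k)) then 0 else if E (en (Suc k)) (en k) then 1 else (2::nat)) = 0"
          using cfv[of k "Suc k"] t0 by simp
        have "E (en k) (en (Suc k))"
        proof (rule ccontr)
          assume "\<not> E (en k) (en (Suc k))"
          then show False using c by (simp split: if_splits)
        qed
        then have e: "embeds N (B k) N (B (Suc k))" unfolding E_def B_def .
        show "\<exists>f. P (B k) (B (Suc k)) f" using embP[OF e] DA AU unfolding B_def by blast
      qed
      have ex: "\<exists>k l f. k < l \<and> P (B k) (B l) f \<and> (\<forall>x\<in>D. f x = x)"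
        by (rule chain_fwd[where P=P and B=B and D=D, OF finD comp PD stp])
      then obtain k l f where kl: "k < l" "P (B k) (B l) f" "\<forall>x\<in>D. f x = x"
        by blast
      have "embeds M' (B k) M' (B l)" using backE[OF kl(2) kl(3)] AU unfolding B_def by blast
      then have "embeds M' (A (en k)) M' (A (en l))" unfolding B_def .
      moreover have "en k \<noteq> en l" using enm[OF \<open>k < l\<close>] by simp
      ultimately show False using anti by blast
    next
      assume "t = 1 \<or> t = 2"
      then show False
      proof (rule disjE)
        assume t1: "t = 1"
        have stp: "\<forall>k. \<exists>f. P (B (Suc k)) (B k) f"
        proof
          fix k
          have c: "(if E (en k) (en (Suc k)) then 0 else if E (en (Suc k)) (en k) then 1 else (2::nat)) = 1"
            using cfv[of k "Suc k"] t1 by simp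
          have "E (en (Suc k)) (en k)"
          proof (rule ccontr)
            assume "\<not> E (en (Suc k)) (en k)"
            then show False using c by (simp split: if_splits)
          qed
          then have e: "embeds N (B (Suc k)) N (B k)" unfolding E_def B_def .
          show "\<exists>f. P (B (Suc k)) (B k) f" using embP[OF e] DA AU unfolding B_def by blast
        qed
        have ex: "\<exists>k l f. k < l \<and> P (B l) (B k) f \<and> (\<forall>x\<in>D. f x = x)"
        by (rule chain_bwd[where P=P and B=B and D=D, OF finD comp PD stp])
      then obtain k l f where kl: "k < l" "P (B l) (B k) f" "\<forall>x\<in>D. f x = x"
          by blast
        have "embeds M' (B l) M' (B k)" using backE[OF kl(2) kl(3)] AU unfolding B_def by blast
        then have "embeds M' (A (en l)) M' (A (en k))" unfolding B_def .
        moreover have "en l \<noteq> en k" using enm[OF \<open>k < l\<close>] by simp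
        ultimately show False using anti by blast
      next
        assume t2: "t = 2"
        have ne: "\<not> E (en k) (en l) \<and> \<not> E (en l) (en k)" if "k < l" for k l
        proof -
          have c: "(if E (en k) (en l) then 0 else if E (en l) (en k) then 1 else (2::nat)) = 2"
            using cfv[OF that] t2 by simp
          show ?thesis
          proof (cases "E (en k) (en l)")
            case True then show ?thesis using c by simp
          next
            case False then show ?thesis using c by (simp split: if_splits)
          qed
        qed
        have anti2: "\<forall>i j. i \<noteq> j \<longrightarrow> \<not> embeds N (B i) N (B j)"
        proof (intro allI impI)
          fix i j :: nat assume "i \<noteq> j"
          then have "i < j \<or> j < i" by arith
          then have "\<not> E (en i) (en j)" using ne by blast
          then show "\<not> embeds N (B i) N (B j)" unfolding E_def B_def .
        qed
        have fB: "\<forall>i. fin_sub N (B i)" using finN by (simp add: B_def)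
        have "\<exists>A :: nat \<Rightarrow> 'a set. (\<forall>i. fin_sub N (A i)) \<and>
          (\<forall>i j. i \<noteq> j \<longrightarrow> \<not> embeds N (A i) N (A j))" using fB anti2 by blast
        then show False using wqoN unfolding age_wqo_def by blast
      qed
    qed
  qed
qed

end
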